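(* Let $X$ be a set of pointed Kripke models, $\Lambda$ a normal modal logic sound with respect to $X$ which is compact, and $D\subseteq\boldsymbol{\mathcal{L}}_{\Lambda}$ a descriptor such that $X$ is saturated with respect to $D$. Then the space $(X_D,\mathcal{T}_D)$ is compact.
   Context: Signature: countable non-empty sets $\Phi$, $\mathcal{I}$; $\mathcal{L}$: $\varphi ::= \top\mid p\mid\neg\varphi\mid\varphi\wedge\varphi\mid\Box_i\varphi$ on pointed Kripke models, standard semantics. $\boldsymbol{\varphi}$: formulas $\Lambda$-provably equivalent to $\varphi$; $\boldsymbol{\mathcal{L}}_{\Lambda}=\{\boldsymbol{\varphi}\}$. $\Lambda$ is compact if a set $A\subseteq\mathcal{L}$ is $\Lambda$-consistent iff every finite subset of $A$ is. A descriptor is $D\subseteq\boldsymbol{\mathcal{L}}_{\Lambda}$; $\boldsymbol{x}_D=\{y\in X:\forall\boldsymbol{\varphi}\in D,\ y\models\varphi\iff x\models\varphi\}$, $X_D=\{\boldsymbol{x}_D:x\in X\}$. $\mathcal{T}_D$ is the topology on $X_D$ generated by the subbasis $\{\boldsymbol{x}:x\models\varphi\}$, $\{\boldsymbol{x}:x\models\neg\varphi\}$, $\boldsymbol{\varphi}\in D$. $X$ is saturated with respect to $D$ if for all $Y,Y'\subseteq D$ such that $B=\{\varphi:\boldsymbol{\varphi}\in Y\}\cup\{\neg\varphi:\boldsymbol{\varphi}\in Y'\}$ is $\Lambda$-consistent, there is $x\in X$ with $x\models\psi$ for all $\psi\in B$. *)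

theory Defs
  imports "HOL-Analysis.Analysis" "HOL-Library.Countable"
begin

datatype ('p, 'i) fm =
    Top
  | Prop 'p
  | Neg "('p, 'i) fm"
  | Conj "('p, 'i) fm" "('p, 'i) fm"
  | Box 'i "('p, 'i) fm"

definition Imp :: "('p, 'i) fm \<Rightarrow> ('p, 'i) fm \<Rightarrow> ('p, 'i) fm" where
  "Imp a b = Neg (Conj a (Neg b))"

definition Iff :: "('p, 'i) fm \<Rightarrow> ('p, 'i) fm \<Rightarrow> ('p, 'i) fm" where
  "Iff a b = Conj (Imp a b) (Imp b a)"

definition Bot :: "('p, 'i) fm" where
  "Bot = Neg Top"

fun Conjs :: "('p, 'i) fm list \<Rightarrow> ('p, 'i) fm" where
  "Conjs [] = Top"
| "Conjs (a # as) = Conj a (Conjs as)"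

fun subst :: "('p \<Rightarrow> ('p, 'i) fm) \<Rightarrow> ('p, 'i) fm \<Rightarrow> ('p, 'i) fm" where
  "subst s Top = Top"
| "subst s (Prop p) = s p"
| "subst s (Neg a) = Neg (subst s a)"
| "subst s (Conj a b) = Conj (subst s a) (subst s b)"
| "subst s (Box i a) = Box i (subst s a)"

text \<open>A Kripke model: a set of worlds, an accessibility relation for each agent,
  and a valuation.  A pointed Kripke model is a model together with a world.\<close>
type_synonym ('w, 'p, 'i) kmodel =
  "'w set \<times> ('i \<Rightarrow> 'w \<Rightarrow> 'w \<Rightarrow> bool) \<times> ('p \<Rightarrow> 'w \<Rightarrow> bool)"

type_synonym ('w, 'p, 'i) pmodel = "('w, 'p, 'i) kmodel \<times> 'w"

definition is_pointed_model :: "('w, 'p, 'i) pmodel \<Rightarrow> bool" where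
  "is_pointed_model x \<longleftrightarrow>
     (case x of ((W, R, V), w) \<Rightarrow> w \<in> W \<and> (\<forall>i u v. R i u v \<longrightarrow> u \<in> W \<and> v \<in> W))"

fun sem :: "('w, 'p, 'i) kmodel \<Rightarrow> 'w \<Rightarrow> ('p, 'i) fm \<Rightarrow> bool" where
  "sem M w Top = True"
| "sem M w (Prop p) = (snd (snd M)) p w"
| "sem M w (Neg a) = (\<not> sem M w a)"
| "sem M w (Conj a b) = (sem M w a \<and> sem M w b)"
| "sem M w (Box i a) = (\<forall>v \<in> fst M. fst (snd M) i w v \<longrightarrow> sem M v a)"

definition sat :: "('w, 'p, 'i) pmodel \<Rightarrow> ('p, 'i) fm \<Rightarrow> bool" where
  "sat x a = sem (fst x) (snd x) a"

fun peval :: "(('p, 'i) fm \<Rightarrow> bool) \<Rightarrow> ('p, 'i) fm \<Rightarrow> bool" where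
  "peval v Top = True"
| "peval v (Prop p) = v (Prop p)"
| "peval v (Neg a) = (\<not> peval v a)"
| "peval v (Conj a b) = (peval v a \<and> peval v b)"
| "peval v (Box i a) = v (Box i a)"

definition tautology :: "('p, 'i) fm \<Rightarrow> bool" where
  "tautology a \<longleftrightarrow> (\<forall>v. peval v a)"

definition normal_logic :: "('p, 'i) fm set \<Rightarrow> bool" where
  "normal_logic \<Lambda> \<longleftrightarrow>
     (\<forall>a. tautology a \<longrightarrow> a \<in> \<Lambda>)
   \<and> (\<forall>i a b. Imp (Box i (Imp a b)) (Imp (Box i a) (Box i b)) \<in> \<Lambda>)
   \<and> (\<forall>a b. a \<in> \<Lambda> \<longrightarrow> Imp a b \<in> \<Lambda> \<longrightarrow> b \<in> \<Lambda>)
   \<and> (\<forall>i a. a \<in> \<Lambda> \<longrightarrow> Box i a \<in> \<Lambda>)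
   \<and> (\<forall>s a. a \<in> \<Lambda> \<longrightarrow> subst s a \<in> \<Lambda>)"

definition sound_wrt :: "('p, 'i) fm set \<Rightarrow> ('w, 'p, 'i) pmodel set \<Rightarrow> bool" where
  "sound_wrt \<Lambda> X \<longleftrightarrow> (\<forall>a \<in> \<Lambda>. \<forall>x \<in> X. sat x a)"

definition consistent :: "('p, 'i) fm set \<Rightarrow> ('p, 'i) fm set \<Rightarrow> bool" where
  "consistent \<Lambda> A \<longleftrightarrow> (\<nexists>as. set as \<subseteq> A \<and> Neg (Conjs as) \<in> \<Lambda>)"

definition compact_logic :: "('p, 'i) fm set \<Rightarrow> bool" where
  "compact_logic \<Lambda> \<longleftrightarrow>
     (\<forall>A. consistent \<Lambda> A \<longleftrightarrow> (\<forall>F. finite F \<and> F \<subseteq> A \<longrightarrow> consistent \<Lambda> F))"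

definition fcls :: "('p, 'i) fm set \<Rightarrow> ('p, 'i) fm \<Rightarrow> ('p, 'i) fm set" where
  "fcls \<Lambda> a = {b. Iff a b \<in> \<Lambda>}"

definition Lclasses :: "('p, 'i) fm set \<Rightarrow> ('p, 'i) fm set set" where
  "Lclasses \<Lambda> = range (fcls \<Lambda>)"

definition pcls ::
  "('p, 'i) fm set \<Rightarrow> ('w, 'p, 'i) pmodel set \<Rightarrow> ('p, 'i) fm set set \<Rightarrow> ('w, 'p, 'i) pmodel
     \<Rightarrow> ('w, 'p, 'i) pmodel set" where
  "pcls \<Lambda> X D x = {y \<in> X. \<forall>a. fcls \<Lambda> a \<in> D \<longrightarrow> (sat y a \<longleftrightarrow> sat x a)}"

definition XD ::
  "('p, 'i) fm set \<Rightarrow> ('w, 'p, 'i) pmodel set \<Rightarrow> ('p, 'i) fm set set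
     \<Rightarrow> ('w, 'p, 'i) pmodel set set" where
  "XD \<Lambda> X D = pcls \<Lambda> X D ` X"

text \<open>The whole space X_D is added (it is open anyway) so
  that the generated topology has carrier exactly X_D even when D is empty.\<close>
definition subbasis_D ::
  "('p, 'i) fm set \<Rightarrow> ('w, 'p, 'i) pmodel set \<Rightarrow> ('p, 'i) fm set set
     \<Rightarrow> ('w, 'p, 'i) pmodel set set set" where
  "subbasis_D \<Lambda> X D =
     insert (XD \<Lambda> X D)
      ({pcls \<Lambda> X D ` {x \<in> X. sat x a} | a. fcls \<Lambda> a \<in> D}
       \<union> {pcls \<Lambda> X D ` {x \<in> X. sat x (Neg a)} | a. fcls \<Lambda> a \<in> D})"

definition TD ::
  "('p, 'i) fm set \<Rightarrow> ('w, 'p, 'i) pmodel set \<Rightarrow> ('p, 'i) fm set set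
     \<Rightarrow> ('w, 'p, 'i) pmodel set topology" where
  "TD \<Lambda> X D = topology_generated_by (subbasis_D \<Lambda> X D)"

definition saturated ::
  "('p, 'i) fm set \<Rightarrow> ('w, 'p, 'i) pmodel set \<Rightarrow> ('p, 'i) fm set set \<Rightarrow> bool" where
  "saturated \<Lambda> X D \<longleftrightarrow>
     (\<forall>Y Y'. Y \<subseteq> D \<longrightarrow> Y' \<subseteq> D \<longrightarrow>
        (let B = {a. fcls \<Lambda> a \<in> Y} \<union> {Neg a | a. fcls \<Lambda> a \<in> Y'} in
         consistent \<Lambda> B \<longrightarrow> (\<exists>x \<in> X. \<forall>b \<in> B. sat x b)))"

end

theory Submission
  imports Defs "HOL-Analysis.Function_Topology"
begin

lemma gen_eq_subbase:
  "topology_generated_by S = topology (arbitrary union_of (finite intersection_of (\<lambda>x. x \<in> S) relative_to \<Union>S))"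
proof -
  let ?T = "topology (arbitrary union_of (finite intersection_of (\<lambda>x. x \<in> S) relative_to \<Union>S))"
  have 1: "openin ?T s" if "s \<in> S" for s
  proof -
    have "(finite intersection_of (\<lambda>x. x \<in> S) relative_to \<Union>S) s"
      using that by (metis Sup_upper inf.absorb_iff2 relative_to_inc finite_intersection_of_inc)
    then show ?thesis unfolding openin_subbase by (simp add: arbitrary_union_of_inc)
  qed
  have "openin (topology_generated_by S) s \<longleftrightarrow> openin ?T s" for s
  proof
    assume "openin (topology_generated_by S) s"
    then have "generate_topology_on S s" by (rule openin_topology_generated_by)
    then show "openin ?T s"
      by (rule generate_topology_on_coarsest[where T="openin ?T", rotated 2]) (use 1 in auto)
  next
    assume "openin ?T s"
    then show "openin (topology_generated_by S) s"
      by (rule minimal_topology_subbase[rotated 2])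
         (auto intro: topology_generated_by_Basis simp: openin_topspace[of "topology_generated_by S", simplified])
  qed
  then show ?thesis by (simp add: topology_eq)
qed

lemma sat_Conjs: "sat x (Conjs as) \<longleftrightarrow> (\<forall>a\<in>set as. sat x a)"
  by (induction as) (auto simp: sat_def)

lemma sat_Neg: "sat x (Neg a) \<longleftrightarrow> \<not> sat x a"
  by (simp add: sat_def)

lemma sat_Iff: "sat x (Iff a b) \<longleftrightarrow> (sat x a \<longleftrightarrow> sat x b)"
  by (auto simp: sat_def Iff_def Imp_def)

lemma Iff_refl: "normal_logic \<Lambda> \<Longrightarrow> Iff b b \<in> \<Lambda>"
proof -
  assume "normal_logic \<Lambda>"
  then have "\<forall>a. tautology a \<longrightarrow> a \<in> \<Lambda>" unfolding normal_logic_def by blast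
  moreover have "tautology (Iff b b)" unfolding tautology_def by (simp add: Iff_def Imp_def)
  ultimately show ?thesis by blast
qed

lemma fcls_eq_sat:
  assumes "normal_logic \<Lambda>" "sound_wrt \<Lambda> X" "x \<in> X" "fcls \<Lambda> a = fcls \<Lambda> b"
  shows "sat x a \<longleftrightarrow> sat x b"
proof -
  have "b \<in> fcls \<Lambda> b" using Iff_refl[OF assms(1)] by (simp add: fcls_def)
  then have "b \<in> fcls \<Lambda> a" using assms(4) by simp
  then have "Iff a b \<in> \<Lambda>" by (simp add: fcls_def)
  then show ?thesis using assms(2,3) sat_Iff unfolding sound_wrt_def by blast
qed

lemma pcls_key:
  assumes "x \<in> X" "fcls \<Lambda> a \<in> D" "y \<in> X" "pcls \<Lambda> X D y = pcls \<Lambda> X D x"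
  shows "sat y a \<longleftrightarrow> sat x a"
proof -
  have "y \<in> pcls \<Lambda> X D y" using assms(3) unfolding pcls_def by blast
  then have "y \<in> pcls \<Lambda> X D x" using assms(4) by simp
  then have "\<forall>a. fcls \<Lambda> a \<in> D \<longrightarrow> (sat y a \<longleftrightarrow> sat x a)" unfolding pcls_def by blast
  then show ?thesis using assms(2) by blast
qed

lemma pcls_mem1:
  assumes "x \<in> X" "fcls \<Lambda> a \<in> D"
  shows "pcls \<Lambda> X D x \<in> pcls \<Lambda> X D ` {y \<in> X. sat y a} \<longleftrightarrow> sat x a"
proof
  assume "pcls \<Lambda> X D x \<in> pcls \<Lambda> X D ` {y \<in> X. sat y a}"
  then obtain y where y: "y \<in> X" "sat y a" "pcls \<Lambda> X D x = pcls \<Lambda> X D y" by blast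
  show "sat x a" using pcls_key[OF assms y(1) y(3)[symmetric]] y(2) by simp
next
  assume "sat x a"
  then show "pcls \<Lambda> X D x \<in> pcls \<Lambda> X D ` {y \<in> X. sat y a}" using assms(1) by blast
qed

lemma pcls_mem2:
  assumes "x \<in> X" "fcls \<Lambda> a \<in> D"
  shows "pcls \<Lambda> X D x \<in> pcls \<Lambda> X D ` {y \<in> X. sat y (Neg a)} \<longleftrightarrow> \<not> sat x a"
proof
  assume "pcls \<Lambda> X D x \<in> pcls \<Lambda> X D ` {y \<in> X. sat y (Neg a)}"
  then obtain y where y: "y \<in> X" "sat y (Neg a)" "pcls \<Lambda> X D x = pcls \<Lambda> X D y" by blast
  show "\<not> sat x a" using pcls_key[OF assms y(1) y(3)[symmetric]] y(2) by (simp add: sat_Neg)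
next
  assume "\<not> sat x a"
  then have "sat x (Neg a)" by (simp add: sat_Neg)
  then show "pcls \<Lambda> X D x \<in> pcls \<Lambda> X D ` {y \<in> X. sat y (Neg a)}" using assms(1) by blast
qed

lemmas pcls_mem = pcls_mem1 pcls_mem2

lemma Union_subbasis: "\<Union>(subbasis_D \<Lambda> X D) = XD \<Lambda> X D"
  unfolding subbasis_D_def XD_def by auto

theorem proposition22:
  fixes X :: "('w, 'p :: countable, 'i :: countable) pmodel set"
    and \<Lambda> :: "('p, 'i) fm set"
    and D :: "('p, 'i) fm set set"
  assumes "\<forall>x \<in> X. is_pointed_model x"
    and "normal_logic \<Lambda>"
    and "sound_wrt \<Lambda> X"
    and "compact_logic \<Lambda>"
    and "D \<subseteq> Lclasses \<Lambda>"
    and "saturated \<Lambda> X D"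
  shows "compact_space (TD \<Lambda> X D)"
proof (rule Alexander_subbase[where \<B>="subbasis_D \<Lambda> X D"])
  show "topology (arbitrary union_of (finite intersection_of (\<lambda>x. x \<in> subbasis_D \<Lambda> X D)
      relative_to \<Union>(subbasis_D \<Lambda> X D))) = TD \<Lambda> X D"
    unfolding TD_def by (simp add: gen_eq_subbase)
next
  fix C assume Csub: "C \<subseteq> subbasis_D \<Lambda> X D" and Ccov: "\<Union>C = topspace (TD \<Lambda> X D)"
  define P where "P = pcls \<Lambda> X D"
  define Sp where "Sp a = P ` {y \<in> X. sat y a}" for a
  define Sn where "Sn a = P ` {y \<in> X. sat y (Neg a)}" for a
  have top: "topspace (TD \<Lambda> X D) = XD \<Lambda> X D"
    unfolding TD_def by (simp add: Union_subbasis)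
  have XD: "XD \<Lambda> X D = P ` X" by (simp add: XD_def P_def)
  show "\<exists>C'. finite C' \<and> C' \<subseteq> C \<and> \<Union>C' = topspace (TD \<Lambda> X D)"
  proof (cases "XD \<Lambda> X D \<in> C")
    case True
    then show ?thesis using top by (intro exI[of _ "{XD \<Lambda> X D}"]) auto
  next
    case False
    have Cform: "\<And>c. c \<in> C \<Longrightarrow> \<exists>a. fcls \<Lambda> a \<in> D \<and> (c = Sp a \<or> c = Sn a)"
      using Csub False unfolding subbasis_D_def Sp_def Sn_def P_def by blast
    show ?thesis
    proof (rule ccontr)
      assume nofin: "\<not> ?thesis"
      define Y where "Y = {fcls \<Lambda> a | a. fcls \<Lambda> a \<in> D \<and> Sn a \<in> C}"
      define Y' where "Y' = {fcls \<Lambda> a | a. fcls \<Lambda> a \<in> D \<and> Sp a \<in> C}"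
      define B where "B = {b. fcls \<Lambda> b \<in> Y} \<union> {Neg b | b. fcls \<Lambda> b \<in> Y'}"
      have good: "\<exists>c\<in>C. \<forall>x\<in>X. P x \<notin> c \<longrightarrow> sat x f" if fB: "f \<in> B" for f
      proof -
        consider "fcls \<Lambda> f \<in> Y" | b where "f = Neg b" "fcls \<Lambda> b \<in> Y'"
          using fB unfolding B_def by blast
        then show ?thesis
        proof cases
          case 1
          then obtain a where a: "fcls \<Lambda> a = fcls \<Lambda> f" "fcls \<Lambda> a \<in> D" "Sn a \<in> C"
            unfolding Y_def by blast
          show ?thesis
          proof (intro bexI[OF _ a(3)] ballI impI)
            fix x assume "x \<in> X" "P x \<notin> Sn a"
            then have "sat x a" using pcls_mem(2)[OF \<open>x \<in> X\<close> a(2)] by (auto simp: Sn_def P_def)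
            then show "sat x f" using fcls_eq_sat[OF assms(2,3) \<open>x \<in> X\<close> a(1)] by simp
          qed
        next
          case 2
          then obtain a where a: "fcls \<Lambda> a = fcls \<Lambda> b" "fcls \<Lambda> a \<in> D" "Sp a \<in> C"
            unfolding Y'_def by blast
          show ?thesis
          proof (intro bexI[OF _ a(3)] ballI impI)
            fix x assume "x \<in> X" "P x \<notin> Sp a"
            then have "\<not> sat x a" using pcls_mem(1)[OF \<open>x \<in> X\<close> a(2)] by (auto simp: Sp_def P_def)
            then show "sat x f" using fcls_eq_sat[OF assms(2,3) \<open>x \<in> X\<close> a(1)] 2(1) by (simp add: sat_Neg)
          qed
        qed
      qed
      define g where "g f = (SOME c. c \<in> C \<and> (\<forall>x\<in>X. P x \<notin> c \<longrightarrow> sat x f))" for f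
      have g: "g f \<in> C \<and> (\<forall>x\<in>X. P x \<notin> g f \<longrightarrow> sat x f)" if "f \<in> B" for f
        unfolding g_def by (rule someI_ex) (use good[OF that] in blast)
      have gC: "g f \<in> C" if "f \<in> B" for f using g[OF that] by (rule conjunct1)
      have gsat: "sat x f" if "f \<in> B" "x \<in> X" "P x \<notin> g f" for f x
        using g[OF that(1)] that(2,3) by blast
      have finc: "\<forall>F. finite F \<and> F \<subseteq> B \<longrightarrow> consistent \<Lambda> F"
      proof (intro allI impI, elim conjE)
        fix F assume F: "finite F" "F \<subseteq> B"
        have fin: "finite (g ` F)" using F(1) by (rule finite_imageI)
        have sub: "g ` F \<subseteq> C" using F(2) gC by blast
        have ne: "\<Union>(g ` F) \<noteq> XD \<Lambda> X D"
        proof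
          assume "\<Union>(g ` F) = XD \<Lambda> X D"
          then have "finite (g ` F) \<and> g ` F \<subseteq> C \<and> \<Union>(g ` F) = topspace (TD \<Lambda> X D)"
            using fin sub top by simp
          then show False by (rule notE[OF nofin exI])
        qed
        have "\<Union>(g ` F) \<subseteq> \<Union>C" using sub by (rule Union_mono)
        then have "\<Union>(g ` F) \<subseteq> XD \<Lambda> X D" using Ccov top by simp
        with ne have "\<exists>z \<in> XD \<Lambda> X D. z \<notin> \<Union>(g ` F)" by blast
        then obtain x where x: "x \<in> X" "P x \<notin> \<Union>(g ` F)" unfolding XD by blast
        have satF: "\<forall>f\<in>F. sat x f"
        proof
          fix f assume "f \<in> F"
          then show "sat x f" using gsat[of f x] F(2) x by blast
        qed
        show "consistent \<Lambda> F"
          unfolding consistent_def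
        proof
          assume "\<exists>as. set as \<subseteq> F \<and> Neg (Conjs as) \<in> \<Lambda>"
          then obtain as where "set as \<subseteq> F" "Neg (Conjs as) \<in> \<Lambda>" by blast
          then have "sat x (Neg (Conjs as))" "sat x (Conjs as)"
            using assms(3) x(1) satF sat_Conjs unfolding sound_wrt_def by blast+
          then show False using sat_Neg by blast
        qed
      qed
      have "consistent \<Lambda> B"
        using assms(4) finc unfolding compact_logic_def by blast
      moreover have "Y \<subseteq> D" "Y' \<subseteq> D" unfolding Y_def Y'_def by auto
      ultimately obtain x where x: "x \<in> X" "\<forall>b\<in>B. sat x b"
        using assms(6) unfolding saturated_def Let_def B_def by blast
      then have "P x \<in> \<Union>C" using Ccov top XD by auto
      then obtain c where c: "c \<in> C" "P x \<in> c" by blast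
      from Cform[OF c(1)] obtain a where a: "fcls \<Lambda> a \<in> D" "c = Sp a \<or> c = Sn a" by blast
      show False
      proof (cases "c = Sp a")
        case True
        then have "Neg a \<in> B" using a c unfolding B_def Y'_def by blast
        then have "\<not> sat x a" using x sat_Neg by blast
        then show False using c True pcls_mem(1)[OF x(1) a(1)] by (simp add: Sp_def P_def)
      next
        case False
        then have "c = Sn a" using a by blast
        then have "a \<in> B" using a c unfolding B_def Y_def by blast
        then have "sat x a" using x by blast
        then show False using c \<open>c = Sn a\<close> pcls_mem(2)[OF x(1) a(1)] by (simp add: Sn_def P_def)
      qed
    qed
  qed
qed

end
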